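(* Let $X\subset\mathcal A^{\mathbb Z}$ be a shift of finite type given by a $0$-$1$ adjacency matrix $M$ indexed by the finite alphabet $\mathcal A$ (so $X=\{x:M_{x_ix_{i+1}}=1\ \forall i\}$), and suppose $M^2>0$ (all entries positive). Let $c_S^n=2^{-n}$ for all $S$. Then $$\operatorname{Asc}(X,\mathscr U_0,\sigma)=\frac14\sum_{k=1}^\infty\frac{\log|\mathscr L_{k}(X)|}{2^k}.$$
   Context: $\sigma$ is the shift. $\mathscr U_0$ is the open cover (partition) of $X$ by rank-0 cylinders $\{x\in X:x_0=a\}$, $a\in\mathcal A$. $\mathscr L_k(X)$ is the set of words of length $k$ occurring in points of $X$. For $S\subset n^*=\{0,\dots,n-1\}$, $\mathscr U_S=\bigvee_{i\in S}\sigma^{-i}\mathscr U$ and $N(\cdot)$ is the minimal cardinality of a subcover; $\operatorname{Asc}(X,\mathscr U,\sigma)=\lim_{n\to\infty}\frac1n\sum_{S\subset n^*}c_S^n\log N(\mathscr U_S)$. *)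

theory Defs
  imports "HOL-Analysis.Analysis"
begin

definition shift :: "(int \<Rightarrow> 'a) \<Rightarrow> (int \<Rightarrow> 'a)" where
  "shift x = (\<lambda>i. x (i + 1))"

definition sft :: "('a \<Rightarrow> 'a \<Rightarrow> nat) \<Rightarrow> (int \<Rightarrow> 'a) set" where
  "sft M = {x. \<forall>i. M (x i) (x (i + 1)) = 1}"

definition rank0_cover :: "(int \<Rightarrow> 'a) set \<Rightarrow> (int \<Rightarrow> 'a) set set" where
  "rank0_cover X = (\<lambda>a. {x \<in> X. x 0 = a}) ` UNIV"

text \<open>Join over i in S of the preimages sigma^{-i} U (relative to X); the empty join is {X}.\<close>
definition cover_join ::
  "(int \<Rightarrow> 'a) set \<Rightarrow> (int \<Rightarrow> 'a) set set \<Rightarrow> nat set \<Rightarrow> (int \<Rightarrow> 'a) set set" where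
  "cover_join X U S =
     {X \<inter> (\<Inter>i\<in>S. (shift ^^ i) -` f i) | f. \<forall>i\<in>S. f i \<in> U}"

definition min_subcover :: "(int \<Rightarrow> 'a) set \<Rightarrow> (int \<Rightarrow> 'a) set set \<Rightarrow> nat" where
  "min_subcover X C = Inf {card V | V. V \<subseteq> C \<and> finite V \<and> \<Union>V = X}"

definition lang :: "(int \<Rightarrow> 'a) set \<Rightarrow> nat \<Rightarrow> 'a list set" where
  "lang X k = {w. length w = k \<and> (\<exists>x\<in>X. \<forall>j<k. w ! j = x (int j))}"

end

theory Submission
  imports Defs
begin

lemma funpow_shift: "(shift ^^ i) x = (\<lambda>j. x (j + int i))"
  by (induction i arbitrary: x) (auto simp: shift_def algebra_simps)

lemma sft_shift: "x \<in> sft M \<Longrightarrow> (\<lambda>j. x (j + c)) \<in> sft M"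
proof -
  assume "x \<in> sft M"
  then have h: "\<forall>i. M (x i) (x (i + 1)) = 1" by (simp add: sft_def)
  show ?thesis unfolding sft_def
  proof (intro CollectI allI)
    fix i
    have e: "i + 1 + c = i + c + 1" by simp
    show "M (x (i + c)) (x (i + 1 + c)) = 1" unfolding e using h by blast
  qed
qed

definition pt :: "nat set \<Rightarrow> (int \<Rightarrow> 'a) \<Rightarrow> (nat \<Rightarrow> 'a)" where
  "pt S x = restrict (\<lambda>i. x (int i)) S"

definition pat :: "(int \<Rightarrow> 'a) set \<Rightarrow> nat set \<Rightarrow> (nat \<Rightarrow> 'a) set" where
  "pat X S = pt S ` X"

lemma pt_eq_iff: "pt S x = pt S y \<longleftrightarrow> (\<forall>i\<in>S. x (int i) = y (int i))"
  unfolding pt_def fun_eq_iff restrict_def by force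



lemma finite_pat: "finite S \<Longrightarrow> finite (pat X S :: (nat \<Rightarrow> 'a::finite) set)"
proof -
  assume "finite S"
  have "pat X S \<subseteq> S \<rightarrow>\<^sub>E (UNIV :: 'a set)" unfolding pat_def pt_def by auto
  moreover have "finite (S \<rightarrow>\<^sub>E (UNIV :: 'a set))" using \<open>finite S\<close> by (simp add: finite_PiE)
  ultimately show ?thesis by (rule finite_subset)
qed

lemma cover_join_mem:
  assumes sh: "\<And>x i. x \<in> X \<Longrightarrow> (shift ^^ i) x \<in> X"
    and v: "v \<in> cover_join X (rank0_cover X) S"
  shows "\<exists>g. v = {x\<in>X. \<forall>i\<in>S. x (int i) = g i}"
proof -
  obtain f where v: "v = X \<inter> (\<Inter>i\<in>S. (shift ^^ i) -` f i)" and f: "\<forall>i\<in>S. f i \<in> rank0_cover X"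
    using v unfolding cover_join_def by blast
  have "\<forall>i\<in>S. \<exists>a. f i = {y\<in>X. y 0 = a}" using f unfolding rank0_cover_def by blast
  from bchoice[OF this] obtain g where g: "\<forall>i\<in>S. f i = {y\<in>X. y 0 = g i}" by blast
  have "v = {x\<in>X. \<forall>i\<in>S. x (int i) = g i}"
    unfolding v using g sh by (auto simp: funpow_shift)
  then show ?thesis by blast
qed

lemma cyl_mem:
  assumes sh: "\<And>x i. x \<in> X \<Longrightarrow> (shift ^^ i) x \<in> X"
  shows "{x\<in>X. pt S x = pt S x0} \<in> cover_join X (rank0_cover X) S"
proof -
  define f where "f i = {y\<in>X. y 0 = x0 (int i)}" for i
  have "{x\<in>X. pt S x = pt S x0} = X \<inter> (\<Inter>i\<in>S. (shift ^^ i) -` f i)"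
    unfolding f_def pt_eq_iff using sh by (auto simp: funpow_shift)
  moreover have "\<forall>i\<in>S. f i \<in> rank0_cover X" unfolding f_def rank0_cover_def by blast
  ultimately show ?thesis unfolding cover_join_def
    by (intro CollectI exI[of _ f]) simp
qed


lemma min_subcover_eq:
  fixes X :: "(int \<Rightarrow> 'a::finite) set"
  assumes sh: "\<And>x i. x \<in> X \<Longrightarrow> (shift ^^ i) x \<in> X" and S: "finite S"
  shows "min_subcover X (cover_join X (rank0_cover X) S) = card (pat X S)"
proof -
  let ?C = "cover_join X (rank0_cover X) S"
  have lower: "card (pat X S) \<le> card V" if V: "V \<subseteq> ?C" "finite V" "\<Union>V = X" for V
  proof -
    define h where "h p = (SOME v. v \<in> V \<and> (\<exists>x\<in>v. pt S x = p))" for p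
    have hp: "h p \<in> V \<and> (\<exists>x\<in>h p. pt S x = p)" if "p \<in> pat X S" for p
    proof -
      from that obtain x where x: "x \<in> X" "p = pt S x" unfolding pat_def by blast
      then obtain v where "v \<in> V" "x \<in> v" using V(3) by blast
      then have "\<exists>v. v \<in> V \<and> (\<exists>x\<in>v. pt S x = p)" using x by blast
      then show ?thesis unfolding h_def by (rule someI_ex)
    qed
    have "inj_on h (pat X S)"
    proof (rule inj_onI)
      fix p q assume p: "p \<in> pat X S" and q: "q \<in> pat X S" and eq: "h p = h q"
      obtain x where x: "x \<in> h p" "pt S x = p" using hp[OF p] by blast
      obtain y where y: "y \<in> h p" "pt S y = q" using hp[OF q] eq by auto
      have "h p \<in> ?C" using hp[OF p] V(1) by blast
      then obtain g where g: "h p = {x\<in>X. \<forall>i\<in>S. x (int i) = g i}"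
        using cover_join_mem[OF sh] by blast
      have "pt S x = pt S y" unfolding pt_eq_iff using x(1) y(1) g by auto
      then show "p = q" using x y by simp
    qed
    moreover have "h ` pat X S \<subseteq> V" using hp by blast
    ultimately show ?thesis using card_inj_on_le[OF _ _ V(2)] by blast
  qed
  define V0 where "V0 = (\<lambda>p. {x\<in>X. pt S x = p}) ` pat X S"
  have V0: "V0 \<subseteq> ?C" "finite V0" "\<Union>V0 = X" "card V0 \<le> card (pat X S)"
  proof -
    show "V0 \<subseteq> ?C" unfolding V0_def pat_def using cyl_mem[OF sh] by blast
    show "finite V0" unfolding V0_def using finite_pat[OF S] by blast
    show "\<Union>V0 = X" unfolding V0_def pat_def by blast
    show "card V0 \<le> card (pat X S)" unfolding V0_def by (rule card_image_le[OF finite_pat[OF S]])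
  qed
  have "card V0 = card (pat X S)" using V0(4) lower[OF V0(1-3)] by linarith
  show ?thesis unfolding min_subcover_def Inf_nat_def
  proof (rule Least_equality)
    show "card (pat X S) \<in> {card V |V. V \<subseteq> ?C \<and> finite V \<and> \<Union> V = X}"
      unfolding mem_Collect_eq
      by (intro exI[of _ V0]) (use V0(1-3) \<open>card V0 = card (pat X S)\<close> in auto)
  next
    fix y assume "y \<in> {card V |V. V \<subseteq> ?C \<and> finite V \<and> \<Union> V = X}"
    then show "card (pat X S) \<le> y" using lower by blast
  qed
qed


lemma restrict_pt: "T \<subseteq> S \<Longrightarrow> restrict (pt S x) T = pt T x"
  unfolding pt_def by (auto simp: restrict_def fun_eq_iff)

lemma pat_product:
  fixes X :: "(int \<Rightarrow> 'a::finite) set"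
  assumes glue: "\<And>x y. x \<in> X \<Longrightarrow> y \<in> X \<Longrightarrow> \<exists>z\<in>X. (\<forall>j<int m. z j = x j) \<and> (\<forall>j>int m. z j = y j)"
    and T: "T \<subseteq> {..<m}" and I: "I \<subseteq> {m<..}"
  shows "card (pat X (T \<union> I)) = card (pat X T) * card (pat X I)"
proof -
  define F where "F p = (restrict p T, restrict p I)" for p :: "nat \<Rightarrow> 'a"
  have img: "F ` pat X (T \<union> I) = pat X T \<times> pat X I"
  proof
    show "F ` pat X (T \<union> I) \<subseteq> pat X T \<times> pat X I"
      unfolding F_def pat_def by (auto simp: restrict_pt)
  next
    show "pat X T \<times> pat X I \<subseteq> F ` pat X (T \<union> I)"
    proof
      fix q assume "q \<in> pat X T \<times> pat X I"
      then obtain x y where xy: "x \<in> X" "y \<in> X" "q = (pt T x, pt I y)" unfolding pat_def by auto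
      obtain z where z: "z \<in> X" "\<forall>j<int m. z j = x j" "\<forall>j>int m. z j = y j" using glue[OF xy(1,2)] by blast
      have "pt T z = pt T x" unfolding pt_eq_iff using z(2) T by auto
      moreover have "pt I z = pt I y" unfolding pt_eq_iff using z(3) I by auto
      ultimately have "q = F (pt (T \<union> I) z)" unfolding F_def using xy(3) by (simp add: restrict_pt)
      then show "q \<in> F ` pat X (T \<union> I)" using z(1) unfolding pat_def by blast
    qed
  qed
  have "inj_on F (pat X (T \<union> I))"
  proof (rule inj_onI)
    fix p q assume "p \<in> pat X (T \<union> I)" "q \<in> pat X (T \<union> I)" "F p = F q"
    then obtain x y where "p = pt (T \<union> I) x" "q = pt (T \<union> I) y" unfolding pat_def by auto
    note pq = this
    have "pt T x = pt T y" "pt I x = pt I y"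
      using \<open>F p = F q\<close> unfolding F_def pq by (simp_all add: restrict_pt)
    then have "\<forall>i\<in>T \<union> I. x (int i) = y (int i)" unfolding pt_eq_iff by blast
    then show "p = q" unfolding pq pt_eq_iff .
  qed
  then have "card (pat X (T \<union> I)) = card (F ` pat X (T \<union> I))" by (simp add: card_image)
  also have "\<dots> = card (pat X T) * card (pat X I)" by (simp add: img card_cartesian_product)
  finally show ?thesis .
qed

lemma pat_interval:
  fixes X :: "(int \<Rightarrow> 'a::finite) set"
  assumes sh: "\<And>x c. x \<in> X \<Longrightarrow> (\<lambda>j. x (j + c)) \<in> X"
  shows "card (pat X {a..<a+k}) = card (lang X k)"
proof -
  define F where "F p = map (\<lambda>j. p (a + j)) [0..<k]" for p :: "nat \<Rightarrow> 'a"
  have img: "F ` pat X {a..<a+k} = lang X k"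
  proof
    show "F ` pat X {a..<a+k} \<subseteq> lang X k"
    proof
      fix w assume "w \<in> F ` pat X {a..<a+k}"
      then obtain x where x: "x \<in> X" "w = F (pt {a..<a+k} x)" unfolding pat_def by auto
      have "(\<lambda>j. x (j + int a)) \<in> X" using sh x(1) by blast
      moreover have "\<forall>j<k. w ! j = x (int j + int a)" using x(2) unfolding F_def pt_def by (auto simp: add.commute)
      ultimately show "w \<in> lang X k" unfolding lang_def using x(2) F_def by (auto simp: add.commute)
    qed
  next
    show "lang X k \<subseteq> F ` pat X {a..<a+k}"
    proof
      fix w assume "w \<in> lang X k"
      then obtain x where x: "x \<in> X" "length w = k" "\<forall>j<k. w ! j = x (int j)" unfolding lang_def by auto
      define y where "y = (\<lambda>j. x (j + (- int a)))"
      have "y \<in> X" unfolding y_def using sh x(1) by blast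
      have "w = F (pt {a..<a+k} y)" unfolding F_def pt_def y_def using x(2,3)
        by (auto intro: nth_equalityI simp: add.commute)
      then show "w \<in> F ` pat X {a..<a+k}" using \<open>y \<in> X\<close> unfolding pat_def by blast
    qed
  qed
  have "inj_on F (pat X {a..<a+k})"
  proof (rule inj_onI)
    fix p q assume "p \<in> pat X {a..<a+k}" "q \<in> pat X {a..<a+k}" "F p = F q"
    then obtain x y where xy: "p = pt {a..<a+k} x" "q = pt {a..<a+k} y" unfolding pat_def by auto
    have "\<forall>j<k. p (a + j) = q (a + j)"
    proof (intro allI impI)
      fix j assume "j < k"
      then have "F p ! j = F q ! j" using \<open>F p = F q\<close> by simp
      then show "p (a + j) = q (a + j)" using \<open>j < k\<close> unfolding F_def by simp
    qed
    note pqk = this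
    have "\<forall>i\<in>{a..<a+k}. x (int i) = y (int i)"
    proof
      fix i assume i: "i \<in> {a..<a+k}"
      then have ik: "i - a < k" and ia: "a + (i - a) = i" by auto
      from pqk[rule_format, OF ik] have "p i = q i" unfolding ia .
      then show "x (int i) = y (int i)" using i unfolding xy pt_def by simp
    qed
    then show "p = q" unfolding xy pt_eq_iff by blast
  qed
  then have "card (F ` pat X {a..<a+k}) = card (pat X {a..<a+k})" by (rule card_image)
  then show ?thesis using img by simp
qed



lemma card_supsets:
  assumes U: "finite U" and A: "A \<subseteq> U"
  shows "card {S\<in>Pow U. A \<subseteq> S} = 2 ^ (card U - card A)"
proof -
  have "bij_betw (\<lambda>B. B \<union> A) (Pow (U - A)) {S\<in>Pow U. A \<subseteq> S}"
  proof (rule bij_betw_byWitness[of _ "\<lambda>S. S - A"])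
    show "\<forall>B\<in>Pow (U - A). (B \<union> A) - A = B" by auto
    show "\<forall>S\<in>{S\<in>Pow U. A \<subseteq> S}. (S - A) \<union> A = S" by auto
    show "(\<lambda>B. B \<union> A) ` Pow (U - A) \<subseteq> {S\<in>Pow U. A \<subseteq> S}" using A by auto
    show "(\<lambda>S. S - A) ` {S\<in>Pow U. A \<subseteq> S} \<subseteq> Pow (U - A)" by auto
  qed
  then have "card {S\<in>Pow U. A \<subseteq> S} = card (Pow (U - A))" by (simp add: bij_betw_same_card)
  also have "\<dots> = 2 ^ card (U - A)" using U by (simp add: card_Pow)
  also have "card (U - A) = card U - card A" using A U by (simp add: card_Diff_subset finite_subset)
  finally show ?thesis .
qed

lemma cesaro:
  fixes X :: "nat \<Rightarrow> real"
  assumes lim: "X \<longlonglongrightarrow> L"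
  shows "(\<lambda>n. (1 / real n) * (\<Sum>i<n. X i)) \<longlonglongrightarrow> L"
proof (rule LIMSEQ_I)
  fix r :: real assume r: "r > 0"
  obtain N where N: "\<And>n. n \<ge> N \<Longrightarrow> norm (X n - L) < r / 2"
    using LIMSEQ_D[OF lim, of "r/2"] r by auto
  define C where "C = (\<Sum>i<N. \<bar>X i - L\<bar>)"
  have C0: "C \<ge> 0" unfolding C_def by (simp add: sum_nonneg)
  define N' where "N' = max (N + 1) (nat \<lceil>2 * C / r\<rceil> + 1)"
  show "\<exists>no. \<forall>n\<ge>no. norm ((1 / real n) * (\<Sum>i<n. X i) - L) < r"
  proof (intro exI allI impI)
    fix n assume n: "n \<ge> N'"
    then have nN: "n \<ge> N" and npos: "n > 0" unfolding N'_def by auto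
    have nC: "real n > 2 * C / r" using n unfolding N'_def by linarith
    then have nC': "C < real n * (r / 2)" using r by (simp add: field_simps)
    have eq: "(1 / real n) * (\<Sum>i<n. X i) - L = (1 / real n) * (\<Sum>i<n. X i - L)"
      using npos by (simp add: sum_subtractf field_simps)
    have split: "(\<Sum>i<n. X i - L) = (\<Sum>i<N. X i - L) + (\<Sum>i\<in>{N..<n}. X i - L)"
    proof -
      have "{..<n} = {..<N} \<union> {N..<n}" using nN by auto
      moreover have "{..<N} \<inter> {N..<n} = {}" by auto
      ultimately show ?thesis by (simp add: sum.union_disjoint[of "{..<N}" "{N..<n}"])
    qed
    have b1: "\<bar>\<Sum>i<N. X i - L\<bar> \<le> C" unfolding C_def by (rule sum_abs)
    have "\<bar>\<Sum>i\<in>{N..<n}. X i - L\<bar> \<le> (\<Sum>i\<in>{N..<n}. \<bar>X i - L\<bar>)" by (rule sum_abs)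
    also have "\<dots> \<le> (\<Sum>i\<in>{N..<n}. r / 2)" by (intro sum_mono) (use N in \<open>fastforce intro: less_imp_le\<close>)
    also have "\<dots> \<le> real n * (r / 2)" using r by simp
    finally have b2: "\<bar>\<Sum>i\<in>{N..<n}. X i - L\<bar> \<le> real n * (r / 2)" .
    have "\<bar>\<Sum>i<n. X i - L\<bar> < real n * r" using split b1 b2 nC' by linarith
    then have "\<bar>\<Sum>i<n. X i - L\<bar> / real n < r" using npos by (simp add: field_simps)
    then show "norm ((1 / real n) * (\<Sum>i<n. X i) - L) < r" unfolding eq using npos by simp
  qed
qed


lemma summable_n_half: "summable (\<lambda>n. real n * (1/2::real)^n)"
proof (rule summable_ratio_test[of "3/4" 2])
  fix n :: nat assume n: "n \<ge> 2"
  have "real (Suc n) * (1/2) \<le> 3/4 * real n" using n by simp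
  then have "real (Suc n) * (1/2) * (1/2::real)^n \<le> 3/4 * real n * (1/2)^n"
    by (intro mult_right_mono) auto
  then show "norm (real (Suc n) * (1/2::real) ^ Suc n) \<le> 3/4 * norm (real n * (1/2::real) ^ n)"
    by (simp add: mult_ac)
qed simp

context
  fixes M :: "'a::finite \<Rightarrow> 'a \<Rightarrow> nat"
  assumes zero_one: "\<forall>a b. M a b = 0 \<or> M a b = 1"
    and sq_pos: "\<forall>a c. (\<Sum>b\<in>UNIV. M a b * M b c) > 0"
    and ne: "sft M \<noteq> {}"
begin

lemma glue:
  assumes x: "x \<in> sft M" and y: "y \<in> sft M"
  shows "\<exists>z\<in>sft M. (\<forall>j<m. z j = x j) \<and> (\<forall>j>m. z j = y j)"
proof -
  have "(\<Sum>b\<in>UNIV. M (x (m-1)) b * M b (y (m+1))) > 0" using sq_pos by blast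
  then have "\<exists>b. M (x (m-1)) b * M b (y (m+1)) \<noteq> 0"
  proof (rule contrapos_pp)
    assume "\<not> (\<exists>b. M (x (m-1)) b * M b (y (m+1)) \<noteq> 0)"
    then have "(\<Sum>b\<in>UNIV. M (x (m-1)) b * M b (y (m+1))) = 0" by simp
    then show "\<not> (\<Sum>b\<in>UNIV. M (x (m-1)) b * M b (y (m+1))) > 0" by simp
  qed
  then obtain b where "M (x (m-1)) b * M b (y (m+1)) \<noteq> 0" by blast
  then have "M (x (m-1)) b \<noteq> 0" "M b (y (m+1)) \<noteq> 0" by auto
  then have b: "M (x (m-1)) b = 1" "M b (y (m+1)) = 1"
    using zero_one[rule_format, of "x (m-1)" b] zero_one[rule_format, of b "y (m+1)"] by auto
  define z where "z j = (if j < m then x j else if j = m then b else y j)" for j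
  have "z \<in> sft M" unfolding sft_def
  proof (intro CollectI allI)
    fix i
    consider "i + 1 < m" | "i + 1 = m" | "i = m" | "i > m" by linarith
    then show "M (z i) (z (i + 1)) = 1"
    proof cases
      case 1 then show ?thesis using x unfolding z_def sft_def by auto
    next
      case 2 then have "i = m - 1" by simp
      then show ?thesis using b unfolding z_def by auto
    next
      case 3 then show ?thesis using b unfolding z_def by auto
    next
      case 4 then show ?thesis using y unfolding z_def sft_def by auto
    qed
  qed
  then show ?thesis by (intro bexI[of _ z]) (auto simp: z_def)
qed

definition "flang k = ln (real (card (lang (sft M) k)))"
definition "Fpat S = ln (real (card (pat (sft M) S)))"

lemma sh_sft: "x \<in> sft M \<Longrightarrow> (shift ^^ i) x \<in> sft M"
  using sft_shift by (simp add: funpow_shift)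

lemma card_pat_pos: "finite S \<Longrightarrow> card (pat (sft M) S) > 0"
proof -
  assume S: "finite S"
  have "finite (pat (sft M) S)" using finite_pat[OF S] .
  moreover have "pat (sft M) S \<noteq> {}" using ne unfolding pat_def by simp
  ultimately show ?thesis by (simp add: card_gt_0_iff)
qed

lemma Fpat_interval: "Fpat {a..<a+k} = flang k"
proof -
  have "card (pat (sft M) {a..<a+k}) = card (lang (sft M) k)" by (rule pat_interval) (rule sft_shift)
  then show ?thesis unfolding Fpat_def flang_def by simp
qed

lemma Fpat_product: "T \<subseteq> {..<m} \<Longrightarrow> I \<subseteq> {m<..} \<Longrightarrow> finite I \<Longrightarrow> Fpat (T \<union> I) = Fpat T + Fpat I"
proof -
  assume T: "T \<subseteq> {..<m}" and I: "I \<subseteq> {m<..}" "finite I"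
  have fT: "finite T" using T finite_subset by blast
  have "card (pat (sft M) (T \<union> I)) = card (pat (sft M) T) * card (pat (sft M) I)"
    by (rule pat_product[OF _ T I(1)]) (use glue in blast)
  then show ?thesis unfolding Fpat_def using card_pat_pos[OF fT] card_pat_pos[OF I(2)]
    by (simp add: ln_mult)
qed

lemma flang0: "flang 0 = 0"
proof -
  have "lang (sft M) 0 = {[]}" unfolding lang_def using ne by auto
  then show ?thesis unfolding flang_def by simp
qed


definition "ccf j = flang j - 2 * flang (j - 1) + flang (j - 2)"

lemma telescope: "(\<Sum>j\<in>{1..r}. ccf j) = flang r - flang (r - 1)"
proof (induction r)
  case 0 then show ?case by simp
next
  case (Suc r)
  have "(\<Sum>j\<in>{1..Suc r}. ccf j) = (\<Sum>j\<in>{1..r}. ccf j) + ccf (Suc r)"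
    by (simp add: sum.cl_ivl_Suc)
  also have "\<dots> = flang (Suc r) - flang (Suc r - 1)" using Suc by (simp add: ccf_def)
  finally show ?case .
qed

lemma increment:
  assumes nS: "n \<in> S" and Sn: "S \<subseteq> {..n}" and r1: "1 \<le> r" and rn: "r \<le> n + 1"
    and sub: "{n+1-r..n} \<subseteq> S" and gap: "r = n + 1 \<or> n - r \<notin> S"
  shows "Fpat S = Fpat (S - {n}) + flang r - flang (r - 1)"
proof (cases "r = n + 1")
  case True
  have "S = {0..<0+(n+1)}" using Sn sub True by auto
  moreover have "S - {n} = {0..<0+n}" using Sn sub True by auto
  ultimately show ?thesis using Fpat_interval[of 0 "n+1"] Fpat_interval[of 0 n] True by simp
next
  case False
  define m where "m = n - r"
  have rn': "r \<le> n" using False rn by simp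
  have mS: "m \<notin> S" using gap False m_def by simp
  define T where "T = S \<inter> {..<m}"
  have I: "{n+1-r..n} = {m+1..<m+1+r}" using rn' m_def by auto
  have S1: "S = T \<union> {m+1..<m+1+r}"
  proof
    show "S \<subseteq> T \<union> {m+1..<m+1+r}"
    proof
      fix x assume x: "x \<in> S"
      then have "x \<le> n" "x \<noteq> m" using Sn mS by auto
      then show "x \<in> T \<union> {m+1..<m+1+r}" using x rn' unfolding T_def m_def by auto
    qed
    show "T \<union> {m+1..<m+1+r} \<subseteq> S" using sub I unfolding T_def by auto
  qed
  have S2: "S - {n} = T \<union> {m+1..<m+1+(r-1)}"
  proof -
    have "{m+1..<m+1+r} - {n} = {m+1..<m+1+(r-1)}" using rn' r1 m_def by auto
    moreover have "n \<notin> T" unfolding T_def m_def using r1 by auto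
    ultimately show ?thesis using S1 by auto
  qed
  have i1: "Fpat {m+1..<m+1+r} = flang r" by (rule Fpat_interval)
  have i2: "Fpat {m+1..<m+1+(r-1)} = flang (r-1)" by (rule Fpat_interval)
  have p1: "Fpat (T \<union> {m+1..<m+1+r}) = Fpat T + Fpat {m+1..<m+1+r}"
    by (rule Fpat_product) (auto simp: T_def)
  have p2: "Fpat (T \<union> {m+1..<m+1+(r-1)}) = Fpat T + Fpat {m+1..<m+1+(r-1)}"
    by (rule Fpat_product) (auto simp: T_def)
  have "Fpat S = Fpat T + flang r" unfolding S1 p1 i1 ..
  moreover have "Fpat (S - {n}) = Fpat T + flang (r - 1)" unfolding S2 p2 i2 ..
  ultimately show ?thesis by simp
qed

lemma sum_formula:
  "S \<subseteq> {..<n} \<Longrightarrow> Fpat S = (\<Sum>i<n. \<Sum>j\<in>{1..i+1}. if {i+1-j..i} \<subseteq> S then ccf j else 0)"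
proof (induction n arbitrary: S)
  case 0
  then have "S = {0..<0+0}" by auto
  then show ?case using Fpat_interval[of 0 0] flang0 by simp
next
  case (Suc n)
  define S' where "S' = S - {n}"
  have S'n: "S' \<subseteq> {..<n}" using Suc.prems unfolding S'_def by auto
  have "(\<Sum>i<n. \<Sum>j\<in>{1..i+1}. if {i+1-j..i} \<subseteq> S then ccf j else 0)
      = (\<Sum>i<n. \<Sum>j\<in>{1..i+1}. if {i+1-j..i} \<subseteq> S' then ccf j else 0)"
  proof (intro sum.cong refl)
    fix i j assume "i \<in> {..<n}" "j \<in> {1..i+1}"
    then have "({i+1-j..i} \<subseteq> S) = ({i+1-j..i} \<subseteq> S')" unfolding S'_def by auto
    then show "(if {i+1-j..i} \<subseteq> S then ccf j else 0) = (if {i+1-j..i} \<subseteq> S' then ccf j else 0)"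
      by simp
  qed
  also have "\<dots> = Fpat S'" using Suc.IH[OF S'n] by simp
  finally have low: "(\<Sum>i<n. \<Sum>j\<in>{1..i+1}. if {i+1-j..i} \<subseteq> S then ccf j else 0) = Fpat S'" .
  have split: "(\<Sum>i<Suc n. \<Sum>j\<in>{1..i+1}. if {i+1-j..i} \<subseteq> S then ccf j else 0)
     = Fpat S' + (\<Sum>j\<in>{1..n+1}. if {n+1-j..n} \<subseteq> S then ccf j else 0)"
    using low by simp
  show ?case
  proof (cases "n \<in> S")
    case False
    have "(\<Sum>j\<in>{1..n+1}. if {n+1-j..n} \<subseteq> S then ccf j else 0) = 0"
    proof (intro sum.neutral ballI)
      fix j assume "j \<in> {1..n+1}"
      then have "n \<in> {n+1-j..n}" by auto
      then show "(if {n+1-j..n} \<subseteq> S then ccf j else 0) = 0" using False by auto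
    qed
    moreover have "S' = S" using False unfolding S'_def by auto
    ultimately show ?thesis using split by simp
  next
    case True
    define R where "R = {j. 1 \<le> j \<and> j \<le> n + 1 \<and> {n+1-j..n} \<subseteq> S}"
    have finR: "finite R" unfolding R_def by (rule finite_subset[of _ "{..n+1}"]) auto
    have "1 \<in> R" unfolding R_def using True by auto
    define r where "r = Max R"
    have rR: "r \<in> R" unfolding r_def using finR \<open>1 \<in> R\<close> by (intro Max_in) auto
    have rmax: "j \<le> r" if "j \<in> R" for j unfolding r_def using finR that by simp
    have r1: "1 \<le> r" and rn: "r \<le> n + 1" and sub: "{n+1-r..n} \<subseteq> S" using rR unfolding R_def by auto
    have gap: "r = n + 1 \<or> n - r \<notin> S"
    proof (rule ccontr)
      assume "\<not> (r = n + 1 \<or> n - r \<notin> S)"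
      then have a: "r < n + 1" "n - r \<in> S" using rn by auto
      have "{n+1-(r+1)..n} \<subseteq> S"
      proof
        fix x assume "x \<in> {n+1-(r+1)..n}"
        then have "x = n - r \<or> x \<in> {n+1-r..n}" using a by auto
        then show "x \<in> S" using a sub by auto
      qed
      then have "r + 1 \<in> R" unfolding R_def using a by auto
      then show False using rmax by fastforce
    qed
    have "(\<Sum>j\<in>{1..n+1}. if {n+1-j..n} \<subseteq> S then ccf j else 0)
        = (\<Sum>j\<in>{1..n+1}. if j \<le> r then ccf j else 0)"
    proof (intro sum.cong refl)
      fix j assume j: "j \<in> {1..n+1}"
      have "({n+1-j..n} \<subseteq> S) = (j \<le> r)"
      proof
        assume "{n+1-j..n} \<subseteq> S"
        then have "j \<in> R" using j unfolding R_def by auto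
        then show "j \<le> r" by (rule rmax)
      next
        assume "j \<le> r"
        then have "{n+1-j..n} \<subseteq> {n+1-r..n}" by auto
        then show "{n+1-j..n} \<subseteq> S" using sub by blast
      qed
      then show "(if {n+1-j..n} \<subseteq> S then ccf j else 0) = (if j \<le> r then ccf j else 0)" by simp
    qed
    also have "\<dots> = (\<Sum>j\<in>{j\<in>{1..n+1}. j \<le> r}. ccf j)" by (rule sum.inter_filter[symmetric]) simp
    also have "{j\<in>{1..n+1}. j \<le> r} = {1..r}" using rn by auto
    also have "(\<Sum>j\<in>{1..r}. ccf j) = flang r - flang (r - 1)" by (rule telescope)
    finally have last: "(\<Sum>j\<in>{1..n+1}. if {n+1-j..n} \<subseteq> S then ccf j else 0) = flang r - flang (r - 1)" .
    have "Fpat S = Fpat S' + flang r - flang (r - 1)" unfolding S'_def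
      using increment[OF True _ r1 rn sub gap] Suc.prems lessThan_Suc_atMost by auto
    then show ?thesis using split last by simp
  qed
qed


lemma avg: "(\<Sum>S\<in>Pow {..<n}. (1/2)^n * Fpat S) = (\<Sum>i<n. \<Sum>j\<in>{1..i+1}. ccf j / 2^j)"
proof -
  have "(\<Sum>S\<in>Pow {..<n}. (1/2)^n * Fpat S)
      = (\<Sum>S\<in>Pow {..<n}. \<Sum>i<n. \<Sum>j\<in>{1..i+1}. (1/2::real)^n * (if {i+1-j..i} \<subseteq> S then ccf j else 0))"
  proof (intro sum.cong refl)
    fix S assume "S \<in> Pow {..<n}"
    then have "Fpat S = (\<Sum>i<n. \<Sum>j\<in>{1..i+1}. if {i+1-j..i} \<subseteq> S then ccf j else 0)"
      by (intro sum_formula) auto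
    then show "(1/2)^n * Fpat S = (\<Sum>i<n. \<Sum>j\<in>{1..i+1}. (1/2::real)^n * (if {i+1-j..i} \<subseteq> S then ccf j else 0))"
      by (simp only: sum_distrib_left)
  qed
  also have "\<dots> = (\<Sum>i<n. \<Sum>S\<in>Pow {..<n}. \<Sum>j\<in>{1..i+1}. (1/2::real)^n * (if {i+1-j..i} \<subseteq> S then ccf j else 0))"
    by (rule sum.swap)
  also have "\<dots> = (\<Sum>i<n. \<Sum>j\<in>{1..i+1}. \<Sum>S\<in>Pow {..<n}. (1/2::real)^n * (if {i+1-j..i} \<subseteq> S then ccf j else 0))"
    by (intro sum.cong refl) (rule sum.swap)
  also have "\<dots> = (\<Sum>i<n. \<Sum>j\<in>{1..i+1}. ccf j / 2^j)"
  proof (intro sum.cong refl)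
    fix i j assume i: "i \<in> {..<n}" and j: "j \<in> {1..i+1}"
    define A where "A = {i+1-j..i}"
    have AU: "A \<subseteq> {..<n}" using i unfolding A_def by auto
    have cA: "card A = j" using j unfolding A_def by auto
    have jn: "j \<le> n" using i j by auto
    have "(\<Sum>S\<in>Pow {..<n}. (1/2::real)^n * (if A \<subseteq> S then ccf j else 0))
        = (1/2::real)^n * (\<Sum>S\<in>Pow {..<n}. if A \<subseteq> S then ccf j else 0)"
      by (simp add: sum_distrib_left)
    also have "(\<Sum>S\<in>Pow {..<n}. if A \<subseteq> S then ccf j else 0) = (\<Sum>S\<in>{S\<in>Pow {..<n}. A \<subseteq> S}. ccf j)"
      by (rule sum.inter_filter[symmetric]) simp
    also have "\<dots> = real (2 ^ (n - j)) * ccf j"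
      using card_supsets[OF _ AU] cA by simp
    also have "(1/2::real)^n * (real (2 ^ (n - j)) * ccf j) = ccf j / 2^j"
    proof -
      have "(2::real)^n = 2^(n-j) * 2^j" using jn by (simp add: power_add[symmetric])
      then show ?thesis by (simp add: field_simps power_one_over)
    qed
    finally show "(\<Sum>S\<in>Pow {..<n}. (1/2::real)^n * (if {i+1-j..i} \<subseteq> S then ccf j else 0)) = ccf j / 2^j"
      unfolding A_def .
  qed
  finally show ?thesis .
qed

lemma flang_bounds: "0 \<le> flang k \<and> flang k \<le> real k * ln (real (card (UNIV :: 'a set)))"
proof -
  have ne': "lang (sft M) k \<noteq> {}"
  proof -
    obtain x where "x \<in> sft M" using ne by blast
    then have "map (\<lambda>j. x (int j)) [0..<k] \<in> lang (sft M) k" unfolding lang_def by auto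
    then show ?thesis by blast
  qed
  have sub: "lang (sft M) k \<subseteq> {w. set w \<subseteq> (UNIV :: 'a set) \<and> length w = k}" unfolding lang_def by auto
  have fin: "finite {w. set w \<subseteq> (UNIV :: 'a set) \<and> length w = k}" by (rule finite_lists_length_eq) simp
  have le: "card (lang (sft M) k) \<le> card (UNIV :: 'a set) ^ k"
  proof -
    have "card {w. set w \<subseteq> (UNIV :: 'a set) \<and> length w = k} = card (UNIV :: 'a set) ^ k"
      by (rule card_lists_length_eq) simp
    then show ?thesis using card_mono[OF fin sub] by linarith
  qed
  have pos: "card (lang (sft M) k) > 0" using ne' finite_subset[OF sub fin] by (simp add: card_gt_0_iff)
  have "flang k \<le> ln (real (card (UNIV :: 'a set) ^ k))"
    unfolding flang_def using le pos by (subst ln_le_cancel_iff) (auto simp del: of_nat_power simp: of_nat_le_iff)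
  also have "\<dots> = real k * ln (real (card (UNIV :: 'a set)))" by (simp add: ln_realpow)
  finally show ?thesis unfolding flang_def using pos by simp
qed


lemma summable_g: "summable (\<lambda>k. flang k / 2^k)"
proof (rule summable_comparison_test)
  show "\<exists>N. \<forall>n\<ge>N. norm (flang n / 2^n) \<le> ln (real (card (UNIV :: 'a set))) * (real n * (1/2)^n)"
  proof (intro exI allI impI)
    fix n :: nat
    have "norm (flang n / 2^n) = flang n / 2^n" using flang_bounds[of n] by simp
    also have "\<dots> \<le> real n * ln (real (card (UNIV :: 'a set))) / 2^n"
      using flang_bounds[of n] by (intro divide_right_mono) auto
    also have "\<dots> = ln (real (card (UNIV :: 'a set))) * (real n * (1/2)^n)"
      by (simp add: power_one_over field_simps)
    finally show "norm (flang n / 2^n) \<le> ln (real (card (UNIV :: 'a set))) * (real n * (1/2)^n)" .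
  qed
  show "summable (\<lambda>n. ln (real (card (UNIV :: 'a set))) * (real n * (1/2::real)^n))"
    by (intro summable_mult summable_n_half)
qed

lemma series_identity:
  "(\<Sum>j. ccf j / 2^j) = (1/4) * (\<Sum>k. flang (Suc k) / 2^(Suc k))"
  and summable_cc: "summable (\<lambda>j. ccf j / 2^j)"
proof -
  define g where "g k = flang k / 2^k" for k
  define h1 where "h1 j = flang (j - 1) / 2^j" for j
  define h2 where "h2 j = flang (j - 2) / 2^j" for j
  have sg: "summable g" unfolding g_def by (rule summable_g)
  have g0: "g 0 = 0" unfolding g_def using flang0 by simp
  have G: "(\<Sum>k. flang (Suc k) / 2^(Suc k)) = suminf g"
    using suminf_split_head[OF sg] g0 unfolding g_def by simp
  have h1S: "h1 (Suc k) = (1/2) * g k" for k unfolding h1_def g_def by simp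
  have h2S: "h2 (Suc (Suc k)) = (1/4) * g k" for k unfolding h2_def g_def by simp
  have sh1': "summable (\<lambda>k. h1 (Suc k))" unfolding h1S by (intro summable_mult sg)
  have sh1: "summable h1" using sh1' by (simp add: summable_Suc_iff)
  have sh2'': "summable (\<lambda>k. h2 (Suc (Suc k)))" unfolding h2S by (intro summable_mult sg)
  have sh2': "summable (\<lambda>k. h2 (Suc k))" using sh2'' summable_Suc_iff[of "\<lambda>k. h2 (Suc k)"] by blast
  have sh2: "summable h2" using sh2' by (simp add: summable_Suc_iff)
  have H1: "suminf h1 = (1/2) * suminf g"
  proof -
    have "suminf h1 = (\<Sum>k. h1 (Suc k)) + h1 0" using suminf_split_head[OF sh1] by simp
    also have "h1 0 = 0" unfolding h1_def using flang0 by simp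
    also have "(\<Sum>k. h1 (Suc k)) = (1/2) * suminf g" unfolding h1S by (rule suminf_mult[OF sg])
    finally show ?thesis by simp
  qed
  have H2: "suminf h2 = (1/4) * suminf g"
  proof -
    have "suminf h2 = (\<Sum>k. h2 (Suc k)) + h2 0" using suminf_split_head[OF sh2] by simp
    also have "(\<Sum>k. h2 (Suc k)) = (\<Sum>k. h2 (Suc (Suc k))) + h2 (Suc 0)"
      using suminf_split_head[OF sh2'] by simp
    also have "h2 0 = 0" unfolding h2_def using flang0 by simp
    also have "h2 (Suc 0) = 0" unfolding h2_def using flang0 by simp
    also have "(\<Sum>k. h2 (Suc (Suc k))) = (1/4) * suminf g" unfolding h2S by (rule suminf_mult[OF sg])
    finally show ?thesis by simp
  qed
  have ceq: "(\<lambda>j. ccf j / 2^j) = (\<lambda>j. g j - 2 * h1 j + h2 j)"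
    unfolding ccf_def g_def h1_def h2_def by (simp add: fun_eq_iff diff_divide_distrib add_divide_distrib)
  have s1: "summable (\<lambda>j. g j - 2 * h1 j)" by (intro summable_diff sg summable_mult sh1)
  show "summable (\<lambda>j. ccf j / 2^j)" unfolding ceq by (intro summable_add s1 sh2)
  have "(\<Sum>j. ccf j / 2^j) = (\<Sum>j. g j - 2 * h1 j) + suminf h2" unfolding ceq by (rule suminf_add[OF s1 sh2, symmetric])
  also have "(\<Sum>j. g j - 2 * h1 j) = suminf g - 2 * suminf h1"
    using suminf_diff[OF sg summable_mult[OF sh1, of 2]] suminf_mult[OF sh1, of 2] by simp
  finally show "(\<Sum>j. ccf j / 2^j) = (1/4) * (\<Sum>k. flang (Suc k) / 2^(Suc k))" unfolding G using H1 H2 by simp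
qed

lemma Fpat_eq: "Fpat S = ln (real (card (pat (sft M) S)))" by (simp add: Fpat_def)
lemma flang_eq: "flang k = ln (real (card (lang (sft M) k)))" by (simp add: flang_def)

lemma main_limit:
  "(\<lambda>n. (1 / real n) * (\<Sum>S\<in>Pow {..<n}. (1/2)^n * Fpat S)) \<longlonglongrightarrow> (1/4) * (\<Sum>k. flang (Suc k) / 2^(Suc k))"
proof -
  define a where "a m = (\<Sum>j<m. ccf j / 2^j)" for m
  have "a \<longlonglongrightarrow> (\<Sum>j. ccf j / 2^j)" unfolding a_def by (rule summable_LIMSEQ[OF summable_cc])
  then have "(\<lambda>i. a (i + 2)) \<longlonglongrightarrow> (\<Sum>j. ccf j / 2^j)" by (rule LIMSEQ_ignore_initial_segment)
  then have lim: "(\<lambda>n. (1 / real n) * (\<Sum>i<n. a (i + 2))) \<longlonglongrightarrow> (\<Sum>j. ccf j / 2^j)" by (rule cesaro)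
  have ccf0: "ccf 0 = 0" unfolding ccf_def by simp
  have aeq: "a (i + 2) = (\<Sum>j\<in>{1..i+1}. ccf j / 2^j)" for i
  proof -
    have "{..<i+2} = insert 0 {1..i+1}" by auto
    then show ?thesis unfolding a_def using ccf0 by simp
  qed
  show ?thesis using lim unfolding avg aeq series_identity .
qed

end


lemma sh_sft_gen: "x \<in> sft M \<Longrightarrow> (shift ^^ i) x \<in> sft M"
  using sft_shift by (simp add: funpow_shift)

theorem theorem4p2:
  fixes M :: "'a::finite \<Rightarrow> 'a \<Rightarrow> nat"
  assumes zero_one: "\<forall>a b. M a b = 0 \<or> M a b = 1"
    and sq_pos: "\<forall>a c. (\<Sum>b\<in>UNIV. M a b * M b c) > 0"
  shows "(\<lambda>n. (1 / real n) *
            (\<Sum>S\<in>Pow {..<n}. (1 / 2) ^ n *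
               ln (real (min_subcover (sft M) (cover_join (sft M) (rank0_cover (sft M)) S)))))
         \<longlonglongrightarrow> (1 / 4) * (\<Sum>k. ln (real (card (lang (sft M) (Suc k)))) / 2 ^ (Suc k))"
proof -
  have ms: "min_subcover (sft M) (cover_join (sft M) (rank0_cover (sft M)) S) = card (pat (sft M) S)"
    if "S \<in> Pow {..<n}" for S n
    using that by (intro min_subcover_eq sh_sft_gen) (auto intro: finite_subset)
  show ?thesis
  proof (cases "sft M = {}")
    case True
    have "pat (sft M) S = {}" for S unfolding pat_def True by simp
    moreover have "lang (sft M) k = {}" for k unfolding lang_def True by simp
    ultimately show ?thesis using ms by simp
  next
    case False
    have "(\<lambda>n. (1 / real n) * (\<Sum>S\<in>Pow {..<n}. (1/2)^n * Fpat M S))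
          \<longlonglongrightarrow> (1/4) * (\<Sum>k. flang M (Suc k) / 2^(Suc k))"
      by (rule main_limit[OF zero_one sq_pos False])
    moreover have "(\<Sum>S\<in>Pow {..<n}. (1/2)^n * Fpat M S) = (\<Sum>S\<in>Pow {..<n}. (1 / 2) ^ n *
               ln (real (min_subcover (sft M) (cover_join (sft M) (rank0_cover (sft M)) S))))" for n
      by (intro sum.cong refl) (simp add: ms Fpat_eq[OF zero_one sq_pos False])
    ultimately show ?thesis unfolding flang_eq[OF zero_one sq_pos False] by simp
  qed
qed

end
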